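(* Let $T>0$, let $(\pi_n)$ be a sequence of regular partitions of $[0,T]$, i.e. $t^n_k=kT/N_n$ for $k=0,\dots,N_n$ with $(N_n)$ strictly increasing natural numbers, and let $X=\{X(t)\colon t\in[0,T]\}$ be a mean zero second order process satisfying (C1) and (C2) with constants $\gamma\in(0,1)$, $\kappa>0$. Then $$\mathbb{E}V^{(2)}_{N_n}(X,2)\longrightarrow\kappa^2(4-2^{2\gamma})T\qquad(n\to\infty),$$ where $V^{(2)}_{N_n}(X,2)=(T^{-1}N_n)^{2\gamma-1}\sum_{k=1}^{N_n-1}\big(X(t^n_{k+1})-2X(t^n_k)+X(t^n_{k-1})\big)^2$.
   Context: $\sigma_X^2(s,t)=\mathbb{E}[X(t)-X(s)]^2$. $\Psi$ is the class of continuous $\varphi\colon(0,T]\to[0,\infty)$ with $\varphi(h)\to0$, $L(h):=\varphi(h)/h\to\infty$, $hL(h)^3\to0$ as $h\downarrow0$. (C1): $\sigma_X(0,\delta)=O(\delta^\gamma)$ as $\delta\downarrow0$. (C2): for every $\varphi\in\Psi$, $\sup_{\varphi(\delta)\le t\le T-\delta}\sup_{0<h\le\delta}|\sigma_X(t,t+h)/(\kappa h^\gamma)-1|\to0$ as $\delta\downarrow0$. *)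

theory Defs
  imports "HOL-Probability.Probability" "HOL-Library.Landau_Symbols"
begin

definition second_order_process ::
  "'a measure \<Rightarrow> real \<Rightarrow> (real \<Rightarrow> 'a \<Rightarrow> real) \<Rightarrow> bool" where
  "second_order_process M T X \<longleftrightarrow>
     (\<forall>t\<in>{0..T}. X t \<in> borel_measurable M \<and> integrable M (\<lambda>\<omega>. (X t \<omega>)\<^sup>2))"

definition mean_zero :: "'a measure \<Rightarrow> real \<Rightarrow> (real \<Rightarrow> 'a \<Rightarrow> real) \<Rightarrow> bool" where
  "mean_zero M T X \<longleftrightarrow> (\<forall>t\<in>{0..T}. integral\<^sup>L M (X t) = 0)"

definition sigmaX :: "'a measure \<Rightarrow> (real \<Rightarrow> 'a \<Rightarrow> real) \<Rightarrow> real \<Rightarrow> real \<Rightarrow> real" where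
  "sigmaX M X s t = sqrt (integral\<^sup>L M (\<lambda>\<omega>. (X t \<omega> - X s \<omega>)\<^sup>2))"

definition PsiClass :: "real \<Rightarrow> (real \<Rightarrow> real) set" where
  "PsiClass T = {\<phi>. continuous_on {0<..T} \<phi> \<and> (\<forall>h\<in>{0<..T}. \<phi> h \<ge> 0)
      \<and> (\<phi> \<longlongrightarrow> 0) (at_right 0)
      \<and> filterlim (\<lambda>h. \<phi> h / h) at_top (at_right 0)
      \<and> ((\<lambda>h. h * (\<phi> h / h) ^ 3) \<longlongrightarrow> 0) (at_right 0)}"

definition condC1 :: "'a measure \<Rightarrow> (real \<Rightarrow> 'a \<Rightarrow> real) \<Rightarrow> real \<Rightarrow> bool" where
  "condC1 M X \<gamma> \<longleftrightarrow> (\<lambda>\<delta>. sigmaX M X 0 \<delta>) \<in> O[at_right 0](\<lambda>\<delta>. \<delta> powr \<gamma>)"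

text \<open>sup over the set tends to 0, unfolded as: for every eps, eventually all terms are \<le> eps.\<close>
definition condC2 :: "'a measure \<Rightarrow> real \<Rightarrow> (real \<Rightarrow> 'a \<Rightarrow> real) \<Rightarrow> real \<Rightarrow> real \<Rightarrow> bool" where
  "condC2 M T X \<gamma> \<kappa> \<longleftrightarrow> (\<forall>\<phi>\<in>PsiClass T. \<forall>\<epsilon>>0. eventually (\<lambda>\<delta>.
      \<forall>t h. \<phi> \<delta> \<le> t \<and> t \<le> T - \<delta> \<and> 0 < h \<and> h \<le> \<delta> \<longrightarrow>
        \<bar>sigmaX M X t (t + h) / (\<kappa> * h powr \<gamma>) - 1\<bar> \<le> \<epsilon>) (at_right 0))"

definition V2 :: "real \<Rightarrow> real \<Rightarrow> nat \<Rightarrow> (real \<Rightarrow> 'a \<Rightarrow> real) \<Rightarrow> 'a \<Rightarrow> real" where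
  "V2 T \<gamma> N X \<omega> = (real N / T) powr (2 * \<gamma> - 1) *
     (\<Sum>k=1..N-1. (X (real (k+1) * T / N) \<omega> - 2 * X (real k * T / N) \<omega>
                    + X (real (k-1) * T / N) \<omega>)\<^sup>2)"

end

theory Submission
  imports Defs "HOL-Real_Asymp.Real_Asymp" begin

lemma sop_meas: "second_order_process M T X \<Longrightarrow> t\<in>{0..T} \<Longrightarrow> X t \<in> borel_measurable M"
  by (simp add: second_order_process_def)
lemma sop_int: "second_order_process M T X \<Longrightarrow> t\<in>{0..T} \<Longrightarrow> integrable M (\<lambda>\<omega>. (X t \<omega>)\<^sup>2)"
  by (simp add: second_order_process_def)

lemma int_sq_diff:
  assumes "second_order_process M T X" "a\<in>{0..T}" "b\<in>{0..T}"
  shows "integrable M (\<lambda>\<omega>. (X a \<omega> - X b \<omega>)\<^sup>2)"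
proof -
  have "integrable M (\<lambda>\<omega>. 2*(X a \<omega>)\<^sup>2 + 2*(X b \<omega>)\<^sup>2)"
    using sop_int[OF assms(1,2)] sop_int[OF assms(1,3)] by auto
  then show ?thesis
  proof (rule Bochner_Integration.integrable_bound)
    show "(\<lambda>\<omega>. (X a \<omega> - X b \<omega>)\<^sup>2) \<in> borel_measurable M"
      using sop_meas[OF assms(1,2)] sop_meas[OF assms(1,3)] by measurable
    show "AE x in M. norm ((X a x - X b x)\<^sup>2) \<le> norm (2*(X a x)\<^sup>2 + 2*(X b x)\<^sup>2)"
    proof (rule AE_I2)
      fix x
      have "(X a x - X b x)\<^sup>2 \<le> 2*(X a x)\<^sup>2 + 2*(X b x)\<^sup>2"
      proof -
        have "2*(X a x)\<^sup>2 + 2*(X b x)\<^sup>2 - (X a x - X b x)\<^sup>2 = (X a x + X b x)\<^sup>2"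
          by (simp add: power2_eq_square algebra_simps)
        then show ?thesis by (smt (verit) zero_le_power2)
      qed
      then show "norm ((X a x - X b x)\<^sup>2) \<le> norm (2*(X a x)\<^sup>2 + 2*(X b x)\<^sup>2)"
        by simp
    qed
  qed
qed

lemma sq3: "(u + v + w)\<^sup>2 \<le> 3*((u::real)\<^sup>2 + v\<^sup>2 + w\<^sup>2)"
proof -
  have "3*(u\<^sup>2 + v\<^sup>2 + w\<^sup>2) - (u + v + w)\<^sup>2 = (u-v)\<^sup>2+(v-w)\<^sup>2+(u-w)\<^sup>2"
    by (simp add: power2_eq_square algebra_simps)
  then show ?thesis by (smt (verit) zero_le_power2)
qed

lemma ident:
  assumes "second_order_process M T X" "a\<in>{0..T}" "b\<in>{0..T}" "c\<in>{0..T}"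
  shows "integrable M (\<lambda>\<omega>. (X a \<omega> - 2*X b \<omega> + X c \<omega>)\<^sup>2)"
    and "integral\<^sup>L M (\<lambda>\<omega>. (X a \<omega> - 2*X b \<omega> + X c \<omega>)\<^sup>2)
      = 2*integral\<^sup>L M (\<lambda>\<omega>. (X a \<omega> - X b \<omega>)\<^sup>2) + 2*integral\<^sup>L M (\<lambda>\<omega>. (X b \<omega> - X c \<omega>)\<^sup>2)
        - integral\<^sup>L M (\<lambda>\<omega>. (X a \<omega> - X c \<omega>)\<^sup>2)"
proof -
  have eq: "(\<lambda>\<omega>. (X a \<omega> - 2*X b \<omega> + X c \<omega>)\<^sup>2) = (\<lambda>\<omega>. 2*(X a \<omega> - X b \<omega>)\<^sup>2 + 2*(X b \<omega> - X c \<omega>)\<^sup>2 - (X a \<omega> - X c \<omega>)\<^sup>2)"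
    by (rule ext) (simp add: power2_eq_square algebra_simps)
  have i1: "integrable M (\<lambda>\<omega>. (X a \<omega> - X b \<omega>)\<^sup>2)" "integrable M (\<lambda>\<omega>. (X b \<omega> - X c \<omega>)\<^sup>2)"
    "integrable M (\<lambda>\<omega>. (X a \<omega> - X c \<omega>)\<^sup>2)" using int_sq_diff assms by blast+
  show "integrable M (\<lambda>\<omega>. (X a \<omega> - 2*X b \<omega> + X c \<omega>)\<^sup>2)" unfolding eq using i1 by auto
  show "integral\<^sup>L M (\<lambda>\<omega>. (X a \<omega> - 2*X b \<omega> + X c \<omega>)\<^sup>2)
      = 2*integral\<^sup>L M (\<lambda>\<omega>. (X a \<omega> - X b \<omega>)\<^sup>2) + 2*integral\<^sup>L M (\<lambda>\<omega>. (X b \<omega> - X c \<omega>)\<^sup>2)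
        - integral\<^sup>L M (\<lambda>\<omega>. (X a \<omega> - X c \<omega>)\<^sup>2)" unfolding eq using i1 by simp
qed

lemma badb:
  assumes "second_order_process M T X" "a\<in>{0..T}" "b\<in>{0..T}" "c\<in>{0..T}" "0 \<le> T"
  shows "integral\<^sup>L M (\<lambda>\<omega>. (X a \<omega> - 2*X b \<omega> + X c \<omega>)\<^sup>2)
     \<le> 3*(integral\<^sup>L M (\<lambda>\<omega>. (X a \<omega> - X 0 \<omega>)\<^sup>2) + 4*integral\<^sup>L M (\<lambda>\<omega>. (X b \<omega> - X 0 \<omega>)\<^sup>2)
        + integral\<^sup>L M (\<lambda>\<omega>. (X c \<omega> - X 0 \<omega>)\<^sup>2))"
proof -
  have z: "0 \<in> {0..T}" using assms by auto
  have i1: "integrable M (\<lambda>\<omega>. (X a \<omega> - X 0 \<omega>)\<^sup>2)" "integrable M (\<lambda>\<omega>. (X b \<omega> - X 0 \<omega>)\<^sup>2)"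
    "integrable M (\<lambda>\<omega>. (X c \<omega> - X 0 \<omega>)\<^sup>2)" using int_sq_diff assms z by blast+
  have "integral\<^sup>L M (\<lambda>\<omega>. (X a \<omega> - 2*X b \<omega> + X c \<omega>)\<^sup>2)
     \<le> integral\<^sup>L M (\<lambda>\<omega>. 3*((X a \<omega> - X 0 \<omega>)\<^sup>2 + 4*(X b \<omega> - X 0 \<omega>)\<^sup>2 + (X c \<omega> - X 0 \<omega>)\<^sup>2))"
  proof (rule integral_mono)
    show "integrable M (\<lambda>\<omega>. (X a \<omega> - 2*X b \<omega> + X c \<omega>)\<^sup>2)" using ident assms by blast
    show "integrable M (\<lambda>\<omega>. 3*((X a \<omega> - X 0 \<omega>)\<^sup>2 + 4*(X b \<omega> - X 0 \<omega>)\<^sup>2 + (X c \<omega> - X 0 \<omega>)\<^sup>2))"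
      using i1 by auto
    fix \<omega>
    have "(X a \<omega> - 2*X b \<omega> + X c \<omega>)\<^sup>2 = ((X a \<omega> - X 0 \<omega>) + (-2*(X b \<omega> - X 0 \<omega>)) + (X c \<omega> - X 0 \<omega>))\<^sup>2"
      by (simp add: algebra_simps)
    also have "\<dots> \<le> 3*((X a \<omega> - X 0 \<omega>)\<^sup>2 + (-2*(X b \<omega> - X 0 \<omega>))\<^sup>2 + (X c \<omega> - X 0 \<omega>)\<^sup>2)"
      by (rule sq3)
    also have "(-2*(X b \<omega> - X 0 \<omega>))\<^sup>2 = 4*(X b \<omega> - X 0 \<omega>)\<^sup>2"
      unfolding power_mult_distrib by simp
    finally show "(X a \<omega> - 2*X b \<omega> + X c \<omega>)\<^sup>2 \<le> 3*((X a \<omega> - X 0 \<omega>)\<^sup>2 + 4*(X b \<omega> - X 0 \<omega>)\<^sup>2 + (X c \<omega> - X 0 \<omega>)\<^sup>2)" .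
  qed
  also have "\<dots> = 3*(integral\<^sup>L M (\<lambda>\<omega>. (X a \<omega> - X 0 \<omega>)\<^sup>2) + 4*integral\<^sup>L M (\<lambda>\<omega>. (X b \<omega> - X 0 \<omega>)\<^sup>2)
        + integral\<^sup>L M (\<lambda>\<omega>. (X c \<omega> - X 0 \<omega>)\<^sup>2))" using i1 by simp
  finally show ?thesis .
qed

lemma sig2: "(sigmaX M X s t)\<^sup>2 = integral\<^sup>L M (\<lambda>\<omega>. (X t \<omega> - X s \<omega>)\<^sup>2)"
  unfolding sigmaX_def by (simp add: integral_nonneg)

lemma good:
  fixes uA uB uC \<kappa> p q \<epsilon> :: real
  assumes "\<bar>uA/(\<kappa>*p) - 1\<bar> \<le> \<epsilon>" "\<bar>uB/(\<kappa>*p) - 1\<bar> \<le> \<epsilon>" "\<bar>uC/(\<kappa>*(q*p)) - 1\<bar> \<le> \<epsilon>"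
    "\<epsilon> \<le> 1" "\<kappa> > 0" "p > 0" "0 < q" "q \<le> 2"
  shows "\<bar>2*uA\<^sup>2 + 2*uB\<^sup>2 - uC\<^sup>2 - \<kappa>\<^sup>2*p\<^sup>2*(4 - q\<^sup>2)\<bar> \<le> 24*\<kappa>\<^sup>2*p\<^sup>2*\<epsilon>"
proof -
  define A where "A = uA/(\<kappa>*p)"
  define B where "B = uB/(\<kappa>*p)"
  define C where "C = uC/(\<kappa>*(q*p))"
  have uA: "uA = \<kappa>*p*A" and uB: "uB = \<kappa>*p*B" and uC: "uC = \<kappa>*p*q*C"
    using assms by (auto simp: A_def B_def C_def)
  have sq: "\<bar>Z\<^sup>2 - 1\<bar> \<le> 3*\<epsilon>" if "\<bar>Z - 1\<bar> \<le> \<epsilon>" for Z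
  proof -
    have "\<bar>Z\<^sup>2 - 1\<bar> = \<bar>Z - 1\<bar> * \<bar>Z + 1\<bar>" by (simp add: power2_eq_square algebra_simps abs_mult[symmetric])
    also have "\<dots> \<le> \<epsilon> * 3" using that assms(4) by (intro mult_mono) auto
    finally show ?thesis by simp
  qed
  have a: "\<bar>A\<^sup>2 - 1\<bar> \<le> 3*\<epsilon>" "\<bar>B\<^sup>2 - 1\<bar> \<le> 3*\<epsilon>" "\<bar>C\<^sup>2 - 1\<bar> \<le> 3*\<epsilon>"
    using sq assms(1-3) by (auto simp: A_def B_def C_def)
  have q2: "q\<^sup>2 \<le> 4" using power_mono[of q 2 2] assms by simp
  have "2*uA\<^sup>2 + 2*uB\<^sup>2 - uC\<^sup>2 - \<kappa>\<^sup>2*p\<^sup>2*(4 - q\<^sup>2) = \<kappa>\<^sup>2*p\<^sup>2*(2*(A\<^sup>2-1) + 2*(B\<^sup>2-1) - q\<^sup>2*(C\<^sup>2-1))"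
    unfolding uA uB uC by (simp add: power_mult_distrib algebra_simps)
  also have "\<bar>\<dots>\<bar> = \<kappa>\<^sup>2*p\<^sup>2*\<bar>2*(A\<^sup>2-1) + 2*(B\<^sup>2-1) - q\<^sup>2*(C\<^sup>2-1)\<bar>"
    by (simp add: abs_mult)
  also have "\<dots> \<le> \<kappa>\<^sup>2*p\<^sup>2*(24*\<epsilon>)"
  proof (rule mult_left_mono)
    have "\<bar>q\<^sup>2*(C\<^sup>2-1)\<bar> \<le> 4*(3*\<epsilon>)" unfolding abs_mult using q2 a(3)
      by (intro mult_mono) auto
    then show "\<bar>2*(A\<^sup>2-1) + 2*(B\<^sup>2-1) - q\<^sup>2*(C\<^sup>2-1)\<bar> \<le> 24*\<epsilon>" using a by (smt (verit))
  qed simp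
  finally show ?thesis by simp
qed


lemma ev_comp: "filterlim f F G \<Longrightarrow> eventually P F \<Longrightarrow> eventually (\<lambda>x. P (f x)) G"
  by (simp add: filterlim_iff)

lemma s0b:
  assumes C1: "\<forall>y. 0 < y \<and> y < d0 \<longrightarrow> \<bar>sigmaX M X 0 y\<bar> \<le> C * \<bar>y powr \<gamma>\<bar>"
    and "0 \<le> t" "t \<le> R" "R < d0" "0 \<le> \<gamma>" "0 \<le> C"
  shows "integral\<^sup>L M (\<lambda>\<omega>. (X t \<omega> - X 0 \<omega>)\<^sup>2) \<le> C\<^sup>2 * (R powr \<gamma>)\<^sup>2"
proof (cases "t = 0")
  case True then show ?thesis by simp
next
  case False
  then have t: "0 < t" using assms by simp
  have "sigmaX M X 0 t \<le> C * t powr \<gamma>" using C1 t assms by force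
  moreover have "0 \<le> sigmaX M X 0 t" by (simp add: sigmaX_def)
  ultimately have "(sigmaX M X 0 t)\<^sup>2 \<le> (C * t powr \<gamma>)\<^sup>2" by (rule power_mono)
  also have "\<dots> = C\<^sup>2 * (t powr \<gamma>)\<^sup>2" by (simp add: power_mult_distrib)
  also have "\<dots> \<le> C\<^sup>2 * (R powr \<gamma>)\<^sup>2"
    using assms t by (intro mult_left_mono power_mono powr_mono2) auto
  finally show ?thesis by (simp add: sig2)
qed

lemma key:
  fixes N :: nat and \<phi> :: "real \<Rightarrow> real"
  assumes sop: "second_order_process M T X" and T: "T > 0" and g: "0 < \<gamma>" "\<gamma> < 1"
    and ka: "\<kappa> > 0" and ep: "0 < \<epsilon>" "\<epsilon> \<le> 1" and C: "0 \<le> C" and N: "N \<ge> 1"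
    and C1: "\<forall>y. 0 < y \<and> y < d0 \<longrightarrow> \<bar>sigmaX M X 0 y\<bar> \<le> C * \<bar>y powr \<gamma>\<bar>"
    and phmono: "\<phi> (T / real N) \<le> \<phi> (2 * (T / real N))" and ph0: "0 \<le> \<phi> (2 * (T / real N))"
    and small: "\<phi> (2 * (T / real N)) + 2 * (T / real N) < d0"
    and HA: "\<forall>t h'. \<phi> (T / real N) \<le> t \<and> t \<le> T - T / real N \<and> 0 < h' \<and> h' \<le> T / real N \<longrightarrow>
        \<bar>sigmaX M X t (t + h') / (\<kappa> * h' powr \<gamma>) - 1\<bar> \<le> \<epsilon>"
    and HC: "\<forall>t h'. \<phi> (2 * (T / real N)) \<le> t \<and> t \<le> T - 2 * (T / real N) \<and> 0 < h' \<and> h' \<le> 2 * (T / real N) \<longrightarrow>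
        \<bar>sigmaX M X t (t + h') / (\<kappa> * h' powr \<gamma>) - 1\<bar> \<le> \<epsilon>"
  shows "\<bar>integral\<^sup>L M (V2 T \<gamma> N X) - \<kappa>\<^sup>2 * (4 - 2 powr (2 * \<gamma>)) * T\<bar>
     \<le> 24*\<kappa>\<^sup>2*T*\<epsilon> + (T / real N) powr (1-2*\<gamma>) * (\<phi>(2*(T / real N))/(T / real N) + 2) *
        (18*C\<^sup>2*((\<phi>(2*(T / real N)) + 2*(T / real N)) powr \<gamma>)\<^sup>2 + 4*\<kappa>\<^sup>2*((T / real N) powr \<gamma>)\<^sup>2)
       + \<kappa>\<^sup>2 * (4 - 2 powr (2 * \<gamma>)) * (T / real N)"
proof -
  define h where "h = T / real N"
  have h: "h > 0" using T N by (simp add: h_def)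
  note ph0 = ph0[folded h_def]
  have hN: "h * real N = T" using N by (simp add: h_def)
  define tk where "tk j = real j * T / real N" for j :: nat
  have tkh: "tk j = real j * h" for j by (simp add: tk_def h_def)
  have tkin: "tk j \<in> {0..T}" if "j \<le> N" for j
  proof -
    have "real j * h \<le> real N * h" using that h by (intro mult_right_mono) auto
    then show ?thesis using h hN by (auto simp: tkh algebra_simps)
  qed
  define p where "p = h powr \<gamma>"
  define q :: real where "q = 2 powr \<gamma>"
  define c where "c = 4 - 2 powr (2 * \<gamma>)"
  have p: "p > 0" using h by (simp add: p_def)
  have q: "0 < q" "q \<le> 2" using g by (auto simp: q_def intro: order.trans[OF powr_mono[of \<gamma> 1 2]])
  have q2: "q\<^sup>2 = 2 powr (2 * \<gamma>)" unfolding q_def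
    by (simp add: power2_eq_square powr_add[symmetric])
  have c4: "c = 4 - q\<^sup>2" by (simp add: c_def q2)
  have cpos: "0 \<le> c" "c \<le> 4" using q unfolding c4 by (auto simp: power_mono[of q 2 2, simplified])
  define W where "W = (real N / T) powr (2*\<gamma> - 1)"
  have W: "W = h powr (1 - 2*\<gamma>)"
  proof -
    have "real N / T = inverse h" using N T by (simp add: h_def)
    moreover have "h powr (1 - 2*\<gamma>) = h powr (-(2*\<gamma>-1))" by simp
    ultimately show ?thesis unfolding W_def by (simp only: inverse_powr powr_minus)
  qed
  have W0: "W \<ge> 0" by (simp add: W_def)
  have Wp: "W * p\<^sup>2 = h" unfolding W p_def using h
    by (simp add: power2_eq_square powr_add[symmetric])
  define e where "e k = integral\<^sup>L M (\<lambda>\<omega>. (X (tk (k+1)) \<omega> - 2 * X (tk k) \<omega> + X (tk (k-1)) \<omega>)\<^sup>2)" for k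
  define Bb where "Bb = 18*C\<^sup>2*((\<phi>(2*h) + 2*h) powr \<gamma>)\<^sup>2 + 4*\<kappa>\<^sup>2*p\<^sup>2"
  define S where "S = {k\<in>{1..N-1}. tk (k-1) < \<phi> (2*h)}"
  have Bb0: "0 \<le> Bb" by (simp add: Bb_def)
  have pts: "tk (k+1) \<in> {0..T}" "tk k \<in> {0..T}" "tk (k-1) \<in> {0..T}" if "k \<in> {1..N-1}" for k
  proof -
    have "k+1 \<le> N" "k \<le> N" "k - 1 \<le> N" using that by auto
    then show "tk (k+1) \<in> {0..T}" "tk k \<in> {0..T}" "tk (k-1) \<in> {0..T}" using tkin by blast+
  qed
  have V: "integral\<^sup>L M (V2 T \<gamma> N X) = W * (\<Sum>k=1..N-1. e k)"
  proof -
    have "V2 T \<gamma> N X = (\<lambda>\<omega>. W * (\<Sum>k=1..N-1. (X (tk (k+1)) \<omega> - 2 * X (tk k) \<omega> + X (tk (k-1)) \<omega>)\<^sup>2))"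
      by (rule ext) (simp add: V2_def W_def tk_def)
    then show ?thesis
      using ident(1)[OF sop pts] by (simp add: integral_sum e_def)
  qed
  have tb: "\<bar>e k - \<kappa>\<^sup>2*p\<^sup>2*c\<bar> \<le> 24*\<kappa>\<^sup>2*p\<^sup>2*\<epsilon> + (if k \<in> S then Bb else 0)"
    if k: "k \<in> {1..N-1}" for k
  proof -
    have k1: "1 \<le> k" "k + 1 \<le> N" using k by auto
    have t1: "tk (k+1) = tk k + h" "tk k = tk (k-1) + h" "tk (k+1) = tk (k-1) + 2*h"
      using k1 by (auto simp: tkh of_nat_diff algebra_simps)
    have eid: "e k = 2 * (sigmaX M X (tk k) (tk (k+1)))\<^sup>2 + 2 * (sigmaX M X (tk (k-1)) (tk k))\<^sup>2
        - (sigmaX M X (tk (k-1)) (tk (k+1)))\<^sup>2"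
      unfolding e_def sig2 by (rule ident(2)[OF sop pts[OF k]])
    show ?thesis
    proof (cases "k \<in> S")
      case False
      then have ph: "\<phi> (2*h) \<le> tk (k-1)" using k by (auto simp: S_def)
      have tT: "tk (k+1) \<le> T" using pts[OF k] by auto
      have tT2: "tk (k-1) \<le> T - h" "tk (k-1) \<le> T - 2*h" using t1 tT h by linarith+
      have A: "\<bar>sigmaX M X (tk k) (tk (k+1)) / (\<kappa> * p) - 1\<bar> \<le> \<epsilon>"
        using HA[rule_format, of "tk k" h] ph phmono h tT unfolding h_def[symmetric] p_def t1(1)
        by (auto simp: t1)
      have B: "\<bar>sigmaX M X (tk (k-1)) (tk k) / (\<kappa> * p) - 1\<bar> \<le> \<epsilon>"
        using HA[rule_format, of "tk (k-1)" h] ph phmono h tT tT2 unfolding h_def[symmetric] p_def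
        by (auto simp: t1)
      have C': "\<bar>sigmaX M X (tk (k-1)) (tk (k+1)) / (\<kappa> * (q * p)) - 1\<bar> \<le> \<epsilon>"
      proof -
        have "(2*h) powr \<gamma> = q * p" using h by (simp add: q_def p_def powr_mult)
        moreover have "\<bar>sigmaX M X (tk (k-1)) (tk (k-1) + 2*h) / (\<kappa> * (2*h) powr \<gamma>) - 1\<bar> \<le> \<epsilon>"
          using HC[rule_format, of "tk (k-1)" "2*h"] ph h tT tT2 unfolding h_def[symmetric]
          by auto
        ultimately show ?thesis unfolding t1(3)[symmetric] by simp
      qed
      have "\<bar>e k - \<kappa>\<^sup>2*p\<^sup>2*c\<bar> \<le> 24*\<kappa>\<^sup>2*p\<^sup>2*\<epsilon>"
        unfolding eid c4 by (rule good[OF A B C' ep(2) ka p q])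
      then show ?thesis using False by simp
    next
      case True
      then have ph: "tk (k-1) < \<phi> (2*h)" by (auto simp: S_def)
      define R where "R = \<phi>(2*h) + 2*h"
      have R: "tk (k+1) < R" "R < d0" using ph small unfolding R_def t1(3) h_def by auto
      have tle: "tk (k-1) \<le> tk k" "tk k \<le> tk (k+1)" using h t1 by linarith+
      have b: "integral\<^sup>L M (\<lambda>\<omega>. (X t \<omega> - X 0 \<omega>)\<^sup>2) \<le> C\<^sup>2 * (R powr \<gamma>)\<^sup>2"
        if "0 \<le> t" "t \<le> tk (k+1)" for t
        using s0b[OF C1 that(1) _ R(2)] that R g C by auto
      have "e k \<le> 3*(integral\<^sup>L M (\<lambda>\<omega>. (X (tk (k+1)) \<omega> - X 0 \<omega>)\<^sup>2) + 4*integral\<^sup>L M (\<lambda>\<omega>. (X (tk k) \<omega> - X 0 \<omega>)\<^sup>2)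
        + integral\<^sup>L M (\<lambda>\<omega>. (X (tk (k-1)) \<omega> - X 0 \<omega>)\<^sup>2))"
        unfolding e_def using badb[OF sop pts[OF k]] T by simp
      also have "\<dots> \<le> 3*(C\<^sup>2 * (R powr \<gamma>)\<^sup>2 + 4*(C\<^sup>2 * (R powr \<gamma>)\<^sup>2) + C\<^sup>2 * (R powr \<gamma>)\<^sup>2)"
        using b[of "tk (k+1)"] b[of "tk k"] b[of "tk (k-1)"] pts[OF k] tle by auto
      finally have e1: "e k \<le> 18*C\<^sup>2*(R powr \<gamma>)\<^sup>2" by simp
      have e0: "0 \<le> e k" unfolding e_def by (simp add: integral_nonneg)
      have m4: "\<kappa>\<^sup>2*p\<^sup>2*c \<le> \<kappa>\<^sup>2*p\<^sup>2*4" by (rule mult_left_mono) (use cpos in auto)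
      have "0 \<le> \<kappa>\<^sup>2*p\<^sup>2*c" "\<kappa>\<^sup>2*p\<^sup>2*c \<le> 4*\<kappa>\<^sup>2*p\<^sup>2"
        using cpos m4 by auto
      then have "\<bar>e k - \<kappa>\<^sup>2*p\<^sup>2*c\<bar> \<le> Bb" using e0 e1 unfolding Bb_def R_def by linarith
      moreover have "0 \<le> 24*\<kappa>\<^sup>2*p\<^sup>2*\<epsilon>" using ep by simp
      moreover have "(if k \<in> S then Bb else 0) = Bb" using True by simp
      ultimately show ?thesis by linarith
    qed
  qed
  have cardS: "real (card S) \<le> \<phi>(2*h)/h + 2"
  proof -
    define y where "y = \<phi>(2*h)/h + 1"
    have "S \<subseteq> {..< nat \<lceil>y\<rceil>}"
    proof
      fix k assume "k \<in> S"
      then have k1: "1 \<le> k" and lt: "tk (k-1) < \<phi>(2*h)" by (auto simp: S_def)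
      have "(real k - 1) * h < \<phi>(2*h)" using lt k1 by (simp add: tkh of_nat_diff)
      then have "real k < y" using h by (simp add: y_def field_simps)
      then have "real k < real_of_int \<lceil>y\<rceil>" by (meson le_of_int_ceiling less_le_trans)
      then have "int k < \<lceil>y\<rceil>" by (metis of_int_less_iff of_int_of_nat_eq)
      then show "k \<in> {..< nat \<lceil>y\<rceil>}" by simp
    qed
    then have "card S \<le> card {..< nat \<lceil>y\<rceil>}" by (rule card_mono[rotated]) simp
    then have "real (card S) \<le> real (nat \<lceil>y\<rceil>)" by simp
    also have "\<dots> = real_of_int \<lceil>y\<rceil>"
    proof -
      have "0 \<le> y" using ph0 h by (simp add: y_def)
      then show ?thesis by simp
    qed
    also have "\<dots> \<le> y + 1" by (rule of_int_ceiling_le_add_one)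
    finally show ?thesis by (simp add: y_def)
  qed
  have sumb: "(\<Sum>k=1..N-1. \<bar>e k - \<kappa>\<^sup>2*p\<^sup>2*c\<bar>) \<le> real (N-1) * (24*\<kappa>\<^sup>2*p\<^sup>2*\<epsilon>) + real (card S) * Bb"
  proof -
    have "(\<Sum>k=1..N-1. \<bar>e k - \<kappa>\<^sup>2*p\<^sup>2*c\<bar>) \<le> (\<Sum>k=1..N-1. 24*\<kappa>\<^sup>2*p\<^sup>2*\<epsilon> + (if k \<in> S then Bb else 0))"
      by (rule sum_mono) (rule tb)
    also have "\<dots> = real (N-1) * (24*\<kappa>\<^sup>2*p\<^sup>2*\<epsilon>) + real (card S) * Bb"
      by (simp add: sum.distrib sum.If_cases S_def Int_def)
    finally show ?thesis .
  qed
  have N1: "real (N-1) * h = T - h" using N hN by (simp add: of_nat_diff algebra_simps)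
  have decomp: "W * (\<Sum>k=1..N-1. e k) - \<kappa>\<^sup>2 * c * T = W * (\<Sum>k=1..N-1. e k - \<kappa>\<^sup>2*p\<^sup>2*c) - \<kappa>\<^sup>2*c*h"
  proof -
    have "W * (\<Sum>k=1..N-1. e k - \<kappa>\<^sup>2*p\<^sup>2*c) = W * (\<Sum>k=1..N-1. e k) - real (N-1) * (W*p\<^sup>2) * \<kappa>\<^sup>2 * c"
      by (simp add: sum_subtractf algebra_simps)
    also have "\<dots> = W * (\<Sum>k=1..N-1. e k) - (T - h) * \<kappa>\<^sup>2 * c" unfolding Wp N1 ..
    finally show ?thesis by (simp add: algebra_simps)
  qed
  have "\<bar>W * (\<Sum>k=1..N-1. e k - \<kappa>\<^sup>2*p\<^sup>2*c)\<bar> \<le> W * (\<Sum>k=1..N-1. \<bar>e k - \<kappa>\<^sup>2*p\<^sup>2*c\<bar>)"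
    using W0 by (simp add: abs_mult mult_left_mono sum_abs)
  also have "\<dots> \<le> W * (real (N-1) * (24*\<kappa>\<^sup>2*p\<^sup>2*\<epsilon>) + real (card S) * Bb)"
    using sumb W0 by (rule mult_left_mono)
  also have "\<dots> = 24*\<kappa>\<^sup>2*\<epsilon>*(real (N-1) * (W*p\<^sup>2)) + W * real (card S) * Bb"
    by (simp add: algebra_simps)
  also have "\<dots> \<le> 24*\<kappa>\<^sup>2*T*\<epsilon> + W * (\<phi>(2*h)/h + 2) * Bb"
  proof (rule add_mono)
    show "24*\<kappa>\<^sup>2*\<epsilon>*(real (N-1) * (W*p\<^sup>2)) \<le> 24*\<kappa>\<^sup>2*T*\<epsilon>"
      unfolding Wp N1 using h ep by (simp add: mult_left_mono)
    show "W * real (card S) * Bb \<le> W * (\<phi>(2*h)/h + 2) * Bb"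
      using W0 Bb0 cardS by (intro mult_right_mono mult_left_mono) auto
  qed
  finally have main: "\<bar>W * (\<Sum>k=1..N-1. e k - \<kappa>\<^sup>2*p\<^sup>2*c)\<bar> \<le> 24*\<kappa>\<^sup>2*T*\<epsilon> + W * (\<phi>(2*h)/h + 2) * Bb" .
  have "\<bar>integral\<^sup>L M (V2 T \<gamma> N X) - \<kappa>\<^sup>2 * c * T\<bar> \<le> 24*\<kappa>\<^sup>2*T*\<epsilon> + W * (\<phi>(2*h)/h + 2) * Bb + \<kappa>\<^sup>2*c*h"
    unfolding V decomp using main cpos h by (smt (verit) zero_le_mult_iff zero_le_power2)
  then show ?thesis unfolding c_def W Bb_def p_def h_def by simp
qed


theorem corollary1:
  fixes M :: "'a measure" and T \<gamma> \<kappa> :: real and N :: "nat \<Rightarrow> nat"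
    and X :: "real \<Rightarrow> 'a \<Rightarrow> real"
  assumes "prob_space M" and "T > 0" and "strict_mono N"
    and "second_order_process M T X" and "mean_zero M T X"
    and "0 < \<gamma>" and "\<gamma> < 1" and "\<kappa> > 0"
    and "condC1 M X \<gamma>" and "condC2 M T X \<gamma> \<kappa>"
  shows "(\<lambda>n. integral\<^sup>L M (V2 T \<gamma> (N n) X))
           \<longlonglongrightarrow> \<kappa>\<^sup>2 * (4 - 2 powr (2 * \<gamma>)) * T"
proof -
  note T = assms(2) and g = assms(6,7) and ka = assms(8)
  define \<phi> :: "real \<Rightarrow> real" where "\<phi> = (\<lambda>x. x powr (3/4))"
  have psi: "\<phi> \<in> PsiClass T"
    unfolding PsiClass_def \<phi>_def
  proof (intro CollectI conjI)
    show "continuous_on {0<..T} (\<lambda>x::real. x powr (3/4))"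
      by (intro continuous_intros) auto
    show "\<forall>h\<in>{0<..T}. 0 \<le> h powr (3/4)" by simp
    show "((\<lambda>x::real. x powr (3/4)) \<longlongrightarrow> 0) (at_right 0)" by real_asymp
    show "filterlim (\<lambda>h::real. h powr (3/4) / h) at_top (at_right 0)" by real_asymp
    show "((\<lambda>h::real. h * (h powr (3/4) / h) ^ 3) \<longlongrightarrow> 0) (at_right 0)" by real_asymp
  qed
  obtain C where C: "C > 0" "eventually (\<lambda>x. norm (sigmaX M X 0 x) \<le> C * norm (x powr \<gamma>)) (at_right 0)"
    using assms(9) unfolding condC1_def by (elim landau_o.bigE)
  then obtain d0 where d0: "d0 > 0" "\<forall>y>0. y < d0 \<longrightarrow> norm (sigmaX M X 0 y) \<le> C * norm (y powr \<gamma>)"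
    unfolding eventually_at_right_field by auto
  have C1: "\<forall>y. 0 < y \<and> y < d0 \<longrightarrow> \<bar>sigmaX M X 0 y\<bar> \<le> C * \<bar>y powr \<gamma>\<bar>"
    using d0 by auto
  define hs where "hs n = T / real (N n)" for n
  have NN: "filterlim (\<lambda>n. real (N n)) at_top sequentially"
    by (rule filterlim_compose[OF filterlim_real_sequentially filterlim_subseq[OF assms(3)]])
  have lim1: "filterlim (\<lambda>x::real. T/x) (at_right 0) at_top" using T by real_asymp
  have lim2: "filterlim (\<lambda>x::real. 2*(T/x)) (at_right 0) at_top" using T by real_asymp
  have H1: "filterlim hs (at_right 0) sequentially"
    unfolding hs_def by (rule filterlim_compose[OF lim1 NN])
  have H2: "filterlim (\<lambda>n. 2 * hs n) (at_right 0) sequentially"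
    unfolding hs_def by (rule filterlim_compose[OF lim2 NN])
  define G where "G h = h powr (1-2*\<gamma>) * (\<phi>(2*h)/h + 2) *
        (18*C\<^sup>2*((\<phi>(2*h) + 2*h) powr \<gamma>)\<^sup>2 + 4*\<kappa>\<^sup>2*(h powr \<gamma>)\<^sup>2)
       + \<kappa>\<^sup>2 * (4 - 2 powr (2 * \<gamma>)) * h" for h
  have G0: "(G \<longlongrightarrow> 0) (at_right 0)"
    unfolding G_def \<phi>_def using g by real_asymp
  have Gs: "(\<lambda>n. G (hs n)) \<longlonglongrightarrow> 0" by (rule filterlim_compose[OF G0 H1])
  have R0: "((\<lambda>h. \<phi>(2*h) + 2*h) \<longlongrightarrow> 0) (at_right 0)" unfolding \<phi>_def by real_asymp
  have ev3: "eventually (\<lambda>n. \<phi>(2*hs n) + 2*hs n < d0) sequentially"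
    by (rule ev_comp[OF H1 order_tendstoD(2)[OF R0 d0(1)]])
  have ev5: "eventually (\<lambda>n. N n \<ge> 1) sequentially"
    using NN unfolding filterlim_at_top by (auto elim!: allE[of _ 1] elim: eventually_mono)
  have ev6: "eventually (\<lambda>n. hs n > 0) sequentially"
    using H1 unfolding filterlim_at by (auto elim: eventually_mono)
  show ?thesis
  proof (rule tendstoI)
    fix r :: real assume r: "r > 0"
    define K where "K = 24*\<kappa>\<^sup>2*T + 1"
    have K: "K > 0" using T unfolding K_def by (simp add: add_nonneg_pos)
    define \<epsilon> where "\<epsilon> = min 1 (r / (4*K))"
    have ep: "0 < \<epsilon>" "\<epsilon> \<le> 1" using r K by (auto simp: \<epsilon>_def)
    have "24*\<kappa>\<^sup>2*T*\<epsilon> \<le> K * \<epsilon>" using ep by (simp add: K_def)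
    also have "\<dots> \<le> K * (r / (4*K))" using K by (intro mult_left_mono) (auto simp: \<epsilon>_def)
    also have "\<dots> = r/4" using K by simp
    finally have epr: "24*\<kappa>\<^sup>2*T*\<epsilon> \<le> r/4" .
    have C2e: "eventually (\<lambda>\<delta>. \<forall>t h. \<phi> \<delta> \<le> t \<and> t \<le> T - \<delta> \<and> 0 < h \<and> h \<le> \<delta> \<longrightarrow>
        \<bar>sigmaX M X t (t + h) / (\<kappa> * h powr \<gamma>) - 1\<bar> \<le> \<epsilon>) (at_right 0)"
      using assms(10) psi ep unfolding condC2_def by blast
    have ev1: "eventually (\<lambda>n. \<forall>t h. \<phi> (hs n) \<le> t \<and> t \<le> T - hs n \<and> 0 < h \<and> h \<le> hs n \<longrightarrow>
        \<bar>sigmaX M X t (t + h) / (\<kappa> * h powr \<gamma>) - 1\<bar> \<le> \<epsilon>) sequentially"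
      by (rule ev_comp[OF H1 C2e])
    have ev2: "eventually (\<lambda>n. \<forall>t h. \<phi> (2 * hs n) \<le> t \<and> t \<le> T - 2 * hs n \<and> 0 < h \<and> h \<le> 2 * hs n \<longrightarrow>
        \<bar>sigmaX M X t (t + h) / (\<kappa> * h powr \<gamma>) - 1\<bar> \<le> \<epsilon>) sequentially"
      by (rule ev_comp[OF H2 C2e])
    have ev4: "eventually (\<lambda>n. \<bar>G (hs n)\<bar> < r/2) sequentially"
      using tendstoD[OF Gs, of "r/2"] r by (simp add: dist_real_def)
    from ev1 ev2 ev3 ev4 ev5 ev6
    show "eventually (\<lambda>n. dist (integral\<^sup>L M (V2 T \<gamma> (N n) X)) (\<kappa>\<^sup>2 * (4 - 2 powr (2 * \<gamma>)) * T) < r) sequentially"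
    proof eventually_elim
      case (elim n)
      have hpos: "0 < hs n" using elim by simp
      have pm: "\<phi> (T / real (N n)) \<le> \<phi> (2 * (T / real (N n)))"
        using hpos unfolding \<phi>_def hs_def by (intro powr_mono2) auto
      have p0: "0 \<le> \<phi> (2 * (T / real (N n)))" by (simp add: \<phi>_def)
      have "\<bar>integral\<^sup>L M (V2 T \<gamma> (N n) X) - \<kappa>\<^sup>2 * (4 - 2 powr (2 * \<gamma>)) * T\<bar> \<le> 24*\<kappa>\<^sup>2*T*\<epsilon> + G (hs n)"
        using key[OF assms(4) T g ka ep C(1)[THEN less_imp_le] elim(5) C1 pm p0] elim(1-3)
        unfolding G_def hs_def by (simp add: algebra_simps)
      then show ?case using epr elim(4) by (simp add: dist_real_def)
    qed
  qed
qed

end
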